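(* Let $R>0$, let $\{\beta_k\}_{k\ge0}\subseteq(0,1)$ and $\alpha_0\in(0,\frac1R)$. Define sequences $\{A_k\},\{B_k\},\{\alpha_k\}$ by $B_0=1$ and, for $k\ge0$, $$A_k=\frac{\alpha_k}{2\beta_k}B_k,\qquad B_{k+1}=\frac{B_k}{1-\beta_k},\qquad \alpha_{k+1}=\frac{\alpha_k\beta_{k+1}(1-\alpha_k^2R^2-\beta_k^2)}{\beta_k(1-\beta_k)(1-\alpha_k^2R^2)}.$$ Suppose $\alpha_k\in(0,\frac1R)$ for all $k\ge0$. Let $\mathbf L\colon\mathbb R^n\times\mathbb R^m\to\mathbb R$ be $R$-smooth and convex-concave, let $\mathbf z^0\in\mathbb R^n\times\mathbb R^m$, and define the EAG iterates $$\mathbf z^{k+1/2}=\mathbf z^k+\beta_k(\mathbf z^0-\mathbf z^k)-\alpha_k\mathbf G(\mathbf z^k),\qquad \mathbf z^{k+1}=\mathbf z^k+\beta_k(\mathbf z^0-\mathbf z^k)-\alpha_k\mathbf G(\mathbf z^{k+1/2}),\quad k\ge0.$$ Then the sequence $$V_k:=A_k\|\mathbf G(\mathbf z^k)\|^2+B_k\langle\mathbf G(\mathbf z^k),\mathbf z^k-\mathbf z^0\rangle$$ is nonincreasing in $k$.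
   Context: Write $\mathbf z=(\mathbf x,\mathbf y)$. $\mathbf L$ convex-concave: convex in $\mathbf x$ for fixed $\mathbf y$, concave in $\mathbf y$ for fixed $\mathbf x$. $\mathbf G(\mathbf z)=(\nabla_{\mathbf x}\mathbf L(\mathbf x,\mathbf y),-\nabla_{\mathbf y}\mathbf L(\mathbf x,\mathbf y))$; $\mathbf L$ is $R$-smooth if it is differentiable and $\mathbf G$ is $R$-Lipschitz. *)

theory Defs
  imports "HOL-Analysis.Analysis"
begin

text \<open>A saddle function L on R^n x R^m, written as a function of the pair z = (x,y).
  The product type is a real inner product space with inner product
  (x,y) . (x',y') = x . x' + y . y'.\<close>

definition convex_concave :: "('a::real_normed_vector \<times> 'b::real_normed_vector \<Rightarrow> real) \<Rightarrow> bool" where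
  "convex_concave L \<longleftrightarrow>
     (\<forall>y. convex_on UNIV (\<lambda>x. L (x, y))) \<and> (\<forall>x. concave_on UNIV (\<lambda>y. L (x, y)))"

definition grad :: "('a::real_inner \<times> 'b::real_inner \<Rightarrow> real) \<Rightarrow> 'a \<times> 'b \<Rightarrow> 'a \<times> 'b" where
  "grad L z = (SOME g. (L has_derivative (\<lambda>h. g \<bullet> h)) (at z))"

definition saddle_op :: "('a::real_inner \<times> 'b::real_inner \<Rightarrow> real) \<Rightarrow> 'a \<times> 'b \<Rightarrow> 'a \<times> 'b" where
  "saddle_op L z = (fst (grad L z), - snd (grad L z))"

definition R_smooth :: "real \<Rightarrow> ('a::real_inner \<times> 'b::real_inner \<Rightarrow> real) \<Rightarrow> bool" where
  "R_smooth R L \<longleftrightarrow> (\<forall>z. L differentiable (at z)) \<and>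
     (\<forall>z w. norm (saddle_op L z - saddle_op L w) \<le> R * norm (z - w))"

end

theory Submission
  imports Defs
begin

lemma conv_tangent:
  fixes f :: "'a::real_normed_vector \<Rightarrow> real"
  assumes cv: "convex_on UNIV f" and d: "(f has_derivative D) (at x)"
  shows "D (y - x) \<le> f y - f x"
proof -
  define \<phi> where "\<phi> t = f (x + t *\<^sub>R (y - x))" for t :: real
  have cphi: "convex_on UNIV \<phi>"
  proof (rule convex_onI)
    fix t s r :: real assume "0 < t" "t < 1"
    have "x + ((1 - t) * s + t * r) *\<^sub>R (y - x) = (1 - t) *\<^sub>R (x + s *\<^sub>R (y - x)) + t *\<^sub>R (x + r *\<^sub>R (y - x))"
      by (simp add: algebra_simps)
    then show "\<phi> ((1 - t) *\<^sub>R s + t *\<^sub>R r) \<le> (1 - t) * \<phi> s + t * \<phi> r"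
      unfolding \<phi>_def using convex_onD[OF cv, of t] \<open>0 < t\<close> \<open>t < 1\<close> by simp
  qed simp
  have lin: "((\<lambda>t::real. x + t *\<^sub>R (y - x)) has_derivative (\<lambda>t. t *\<^sub>R (y - x))) (at 0)"
    by (auto intro!: derivative_eq_intros)
  have "(\<phi> has_derivative (\<lambda>t. D (t *\<^sub>R (y - x)))) (at 0)"
    unfolding \<phi>_def using has_derivative_compose[OF lin] d by simp
  moreover have "linear D" using d by (rule has_derivative_linear)
  ultimately have "(\<phi> has_derivative (\<lambda>t. t * D (y - x))) (at 0)"
    by (simp add: linear_scale)
  then have "(\<phi> has_field_derivative D (y - x)) (at 0 within UNIV)"
    by (simp add: has_field_derivative_def mult.commute[of _ "D (y - x)"])
  from convex_on_imp_above_tangent[OF cphi _ _ _ this, of 1]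
  show ?thesis by (simp add: \<phi>_def)
qed

lemma grad_ok:
  fixes L :: "('a::euclidean_space \<times> 'b::euclidean_space) \<Rightarrow> real"
  assumes "L differentiable (at z)"
  shows "(L has_derivative (\<lambda>h. grad L z \<bullet> h)) (at z)"
proof -
  from assms obtain D where d: "(L has_derivative D) (at z)" by (auto simp: differentiable_def)
  have lin: "linear D" using d by (rule has_derivative_linear)
  define g where "g = (\<Sum>b\<in>Basis. D b *\<^sub>R b)"
  have "D h = g \<bullet> h" for h
  proof -
    have "D h = D (\<Sum>b\<in>Basis. (h \<bullet> b) *\<^sub>R b)" by (simp add: euclidean_representation)
    also have "\<dots> = (\<Sum>b\<in>Basis. (h \<bullet> b) * D b)" by (simp add: linear_sum[OF lin] linear_scale[OF lin])
    also have "\<dots> = g \<bullet> h" unfolding g_def by (simp add: inner_sum_left inner_sum_right inner_commute mult.commute)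
    finally show ?thesis .
  qed
  then have "D = (\<lambda>h. g \<bullet> h)" by (rule ext)
  then have "\<exists>g. (L has_derivative (\<lambda>h. g \<bullet> h)) (at z)" using d by blast
  then show ?thesis unfolding grad_def by (rule someI_ex)
qed

lemma partial_x:
  fixes L :: "('a::euclidean_space \<times> 'b::euclidean_space) \<Rightarrow> real"
  assumes "L differentiable (at (x, y))"
  shows "((\<lambda>u. L (u, y)) has_derivative (\<lambda>h. fst (grad L (x, y)) \<bullet> h)) (at x)"
proof -
  have p: "((\<lambda>u. (u, y)) has_derivative (\<lambda>h. (h, 0))) (at x)"
    by (auto intro!: derivative_eq_intros)
  from has_derivative_compose[OF p grad_ok[OF assms]]
  show ?thesis by (simp add: inner_Pair_0)
qed

lemma partial_y:
  fixes L :: "('a::euclidean_space \<times> 'b::euclidean_space) \<Rightarrow> real"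
  assumes "L differentiable (at (x, y))"
  shows "((\<lambda>u. L (x, u)) has_derivative (\<lambda>h. snd (grad L (x, y)) \<bullet> h)) (at y)"
proof -
  have p: "((\<lambda>u. (x, u)) has_derivative (\<lambda>h. (0, h))) (at y)"
    by (auto intro!: derivative_eq_intros)
  from has_derivative_compose[OF p grad_ok[OF assms]]
  show ?thesis by (simp add: inner_Pair_0)
qed

lemma saddle_mono:
  fixes L :: "('a::euclidean_space \<times> 'b::euclidean_space) \<Rightarrow> real"
  assumes diff: "\<forall>z. L differentiable (at z)" and cc: "convex_concave L"
  shows "(saddle_op L z - saddle_op L w) \<bullet> (z - w) \<ge> 0"
proof -
  obtain x y where z: "z = (x, y)" by (cases z)
  obtain x' y' where w: "w = (x', y')" by (cases w)
  define g where "g = grad L (x, y)"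
  define g' where "g' = grad L (x', y')"
  have cx: "convex_on UNIV (\<lambda>u. L (u, v))" for v using cc unfolding convex_concave_def by blast
  have cy: "convex_on UNIV (\<lambda>v. - L (u, v))" for u using cc unfolding convex_concave_def concave_on_def by blast
  have i1: "fst g \<bullet> (x' - x) \<le> L (x', y) - L (x, y)"
    using conv_tangent[OF cx partial_x[of L x y]] diff unfolding g_def by simp
  have i3: "fst g' \<bullet> (x - x') \<le> L (x, y') - L (x', y')"
    using conv_tangent[OF cx partial_x[of L x' y']] diff unfolding g'_def by simp
  have i2: "- (snd g \<bullet> (y' - y)) \<le> - L (x, y') + L (x, y)"
    using conv_tangent[OF cy has_derivative_minus[OF partial_y[of L x y]]] diff unfolding g_def by simp
  have i4: "- (snd g' \<bullet> (y - y')) \<le> - L (x', y) + L (x', y')"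
    using conv_tangent[OF cy has_derivative_minus[OF partial_y[of L x' y']]] diff unfolding g'_def by simp
  have "(saddle_op L z - saddle_op L w) \<bullet> (z - w) =
      - (fst g \<bullet> (x' - x)) - fst g' \<bullet> (x - x') + snd g \<bullet> (y' - y) + snd g' \<bullet> (y - y')"
    unfolding z w saddle_op_def g_def g'_def by (simp add: inner_diff_left inner_diff_right algebra_simps)
  then show ?thesis using i1 i2 i3 i4 by linarith
qed

lemma alg:
  fixes a b b1 s B uu vv ww uw vw ud vd t An Bn aA :: real
  assumes s: "0 < s" "s < 1" and b: "0 < b" "b < 1" and b1: "0 < b1" and a: "0 < a" and B: "B > 0"
  and t: "t = (s - 1 + b) / ((1 - s) * (1 - b))"
  and An: "An = (a * b1 * (1 - s - b\<^sup>2) / (b * (1 - b) * (1 - s))) / (2 * b1) * (B / (1 - b))"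
  and Bn: "Bn = B / (1 - b)"
  and aA: "aA = a / (2 * b) * B"
  and M: "0 \<le> - b * vd + b * ud - a * vw + a * uw"
  and Lp: "0 \<le> s * (uu - 2 * uw + ww) - (vv - 2 * vw + ww)"
  and Sq: "0 \<le> ww + 2 * t * vw + t^2 * vv"
  shows "An * vv + Bn * ((1 - b) * vd - a * vw) \<le> aA * uu + B * ud"
proof -
  define C where "C = a / (2 * s * b)"
  define K where "K = (1 - s) / (2 * s * b)"
  define ib where "ib = 1 / b"
  have nz: "1 - s \<noteq> 0" "1 - b \<noteq> 0" "b \<noteq> 0" "s \<noteq> 0" "b1 \<noteq> 0" using s b b1 by auto
  have e1: "aA = B * C * s" unfolding aA C_def using nz by (simp add: field_simps)
  have e2: "Bn * (1 - b) = B" unfolding Bn using nz by (simp add: field_simps)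
  have e2': "ib * b = 1" unfolding ib_def using nz by simp
  have e3: "ib * a - 2 * C * s = 0" unfolding ib_def C_def using nz by (simp add: field_simps)
  have e5: "C * s - C + a * K = 0" unfolding K_def C_def using nz by (simp add: field_simps)
  have Kt: "K * t = (s - 1 + b) / (2 * s * b * (1 - b))"
  proof -
    have "K * t = ((1 - s) * (s - 1 + b)) / ((2 * s * b) * ((1 - s) * (1 - b)))"
      unfolding K_def t by (simp only: times_divide_times_eq)
    also have "\<dots> = ((1 - s) * (s - 1 + b)) / ((1 - s) * (2 * s * b * (1 - b)))"
      by (simp only: mult.left_commute)
    also have "\<dots> = (s - 1 + b) / (2 * s * b * (1 - b))"
      using nz(1) by (rule mult_divide_mult_cancel_left)
    finally show ?thesis .
  qed
  have e4': "Bn * a = B * (- ib * a + 2 * C + 2 * a * (K * t))" unfolding Bn ib_def C_def Kt using nz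
    by (simp add: field_simps)
  have e4: "Bn * a = B * (- ib * a + 2 * C + 2 * a * K * t)" using e4' by (simp add: mult.assoc)
  have e6: "An = B * (C - a * K * t^2)"
  proof -
    define p where "p = 1 - s"
    define q where "q = 1 - b"
    have pq: "1 - s = p" "1 - b = q" "p \<noteq> 0" "q \<noteq> 0" using nz by (auto simp: p_def q_def)
    show ?thesis unfolding An C_def K_def t pq(1,2) using pq(3,4) nz
      by (simp add: field_simps power2_eq_square) (simp add: p_def q_def algebra_simps)
  qed
  have id: "aA * uu + B * ud - (An * vv + Bn * ((1 - b) * vd - a * vw))
     - B * (ib * (- b * vd + b * ud - a * vw + a * uw) + C * (s * (uu - 2 * uw + ww) - (vv - 2 * vw + ww)) + a * K * (ww + 2 * t * vw + t^2 * vv))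
    = uu * (aA - B * C * s) + ud * B * (1 - ib * b) + vd * (B * ib * b - Bn * (1 - b)) - uw * B * (ib * a - 2 * C * s)
      + vw * (Bn * a - B * (- ib * a + 2 * C + 2 * a * K * t)) - ww * B * (C * s - C + a * K) - vv * (An - B * (C - a * K * t^2))"
    by algebra
  have rhs0: "uu * (aA - B * C * s) + ud * B * (1 - ib * b) + vd * (B * ib * b - Bn * (1 - b)) - uw * B * (ib * a - 2 * C * s)
      + vw * (Bn * a - B * (- ib * a + 2 * C + 2 * a * K * t)) - ww * B * (C * s - C + a * K) - vv * (An - B * (C - a * K * t^2)) = 0"
    using e1 e2 e2' e3 e4 e5 e6 by simp
  have K0: "K \<ge> 0" using s b by (simp add: K_def)
  have C0: "C \<ge> 0" using s b a by (simp add: C_def)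
  have ib0: "ib \<ge> 0" using b by (simp add: ib_def)
  have "0 \<le> B * (ib * (- b * vd + b * ud - a * vw + a * uw) + C * (s * (uu - 2 * uw + ww) - (vv - 2 * vw + ww)) + a * K * (ww + 2 * t * vw + t^2 * vv))"
  proof -
    have "0 \<le> ib * (- b * vd + b * ud - a * vw + a * uw)" using ib0 M by (rule mult_nonneg_nonneg)
    moreover have "0 \<le> C * (s * (uu - 2 * uw + ww) - (vv - 2 * vw + ww))" using C0 Lp by (rule mult_nonneg_nonneg)
    moreover have "0 \<le> a * K * (ww + 2 * t * vw + t^2 * vv)" using a K0 Sq by simp
    ultimately show ?thesis using B by simp
  qed
  then show ?thesis using id rhs0 by linarith
qed
theorem lemma2:
  fixes R :: real
    and \<beta> \<alpha> A B :: "nat \<Rightarrow> real"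
    and L :: "(real ^ 'n) \<times> (real ^ 'm) \<Rightarrow> real"
    and z zh :: "nat \<Rightarrow> (real ^ 'n) \<times> (real ^ 'm)"
    and V :: "nat \<Rightarrow> real"
  assumes R_pos: "R > 0"
    and beta_range: "\<And>k. 0 < \<beta> k \<and> \<beta> k < 1"
    and alpha0: "0 < \<alpha> 0 \<and> \<alpha> 0 < 1 / R"
    and B0: "B 0 = 1"
    and A_def: "\<And>k. A k = \<alpha> k / (2 * \<beta> k) * B k"
    and B_rec: "\<And>k. B (Suc k) = B k / (1 - \<beta> k)"
    and alpha_rec: "\<And>k. \<alpha> (Suc k) =
          \<alpha> k * \<beta> (Suc k) * (1 - (\<alpha> k)\<^sup>2 * R\<^sup>2 - (\<beta> k)\<^sup>2)
          / (\<beta> k * (1 - \<beta> k) * (1 - (\<alpha> k)\<^sup>2 * R\<^sup>2))"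
    and alpha_range: "\<And>k. 0 < \<alpha> k \<and> \<alpha> k < 1 / R"
    and smooth: "R_smooth R L"
    and cc: "convex_concave L"
    and zh_def: "\<And>k. zh k = z k + \<beta> k *\<^sub>R (z 0 - z k) - \<alpha> k *\<^sub>R saddle_op L (z k)"
    and z_rec: "\<And>k. z (Suc k) = z k + \<beta> k *\<^sub>R (z 0 - z k) - \<alpha> k *\<^sub>R saddle_op L (zh k)"
    and V_def: "\<And>k. V k = A k * (norm (saddle_op L (z k)))\<^sup>2
                         + B k * (saddle_op L (z k) \<bullet> (z k - z 0))"
  shows "\<And>k. V (Suc k) \<le> V k"
  proof -
  fix k
  have Bpos: "B j > 0" for j
  proof (induction j)
    case 0 then show ?case using B0 by simp
  next
    case (Suc j) then show ?case using B_rec[of j] beta_range[of j] by simp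
  qed
  have diff: "\<forall>z. L differentiable (at z)" using smooth unfolding R_smooth_def by blast
  have lip: "norm (saddle_op L p - saddle_op L q) \<le> R * norm (p - q)" for p q
    using smooth unfolding R_smooth_def by blast
  define u where "u = saddle_op L (z k)"
  define v where "v = saddle_op L (z (Suc k))"
  define w where "w = saddle_op L (zh k)"
  define d where "d = z k - z 0"
  define a where "a = \<alpha> k"
  define b where "b = \<beta> k"
  define s where "s = (\<alpha> k)\<^sup>2 * R\<^sup>2"
  define t where "t = (s - 1 + b) / ((1 - s) * (1 - b))"
  have a0: "0 < a" "a < 1 / R" using alpha_range[of k] by (auto simp: a_def)
  have b0: "0 < b" "b < 1" using beta_range[of k] by (auto simp: b_def)
  have s0: "0 < s" using a0 R_pos by (simp add: s_def a_def)
  have "a * R < 1" using a0 R_pos by (simp add: field_simps)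
  then have "(a * R)^2 < 1^2" using a0 R_pos by (intro power_strict_mono) auto
  then have s1: "s < 1" by (simp add: s_def a_def power_mult_distrib)
  have zk1: "z (Suc k) - z 0 = (1 - b) *\<^sub>R d - a *\<^sub>R w"
    unfolding z_rec d_def a_def b_def w_def by (simp add: algebra_simps)
  have zk2: "z (Suc k) - z k = (- b) *\<^sub>R d - a *\<^sub>R w"
    unfolding z_rec d_def a_def b_def w_def by (simp add: algebra_simps)
  have zk3: "z (Suc k) - zh k = a *\<^sub>R (u - w)"
    unfolding z_rec zh_def u_def a_def b_def w_def by (simp add: algebra_simps)
  have Vk: "V k = A k * (u \<bullet> u) + B k * (u \<bullet> d)"
    unfolding V_def u_def d_def by (simp add: power2_norm_eq_inner)
  have Vk1: "V (Suc k) = A (Suc k) * (v \<bullet> v) + B (Suc k) * ((1 - b) * (v \<bullet> d) - a * (v \<bullet> w))"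
    unfolding V_def v_def[symmetric] zk1 by (simp add: power2_norm_eq_inner inner_diff_right algebra_simps)
  have M: "0 \<le> (v - u) \<bullet> (z (Suc k) - z k)"
    unfolding u_def v_def using saddle_mono[OF diff cc] by simp
  then have M': "0 \<le> - b * (v \<bullet> d) + b * (u \<bullet> d) - a * (v \<bullet> w) + a * (u \<bullet> w)"
    unfolding zk2 by (simp add: inner_diff_left inner_diff_right algebra_simps)
  have "norm (v - w) \<le> R * norm (z (Suc k) - zh k)" unfolding v_def w_def by (rule lip)
  also have "\<dots> = R * a * norm (u - w)" unfolding zk3 using a0 by simp
  finally have "(norm (v - w))^2 \<le> (R * a * norm (u - w))^2"
    by (intro power_mono) auto
  then have "(v - w) \<bullet> (v - w) \<le> s * ((u - w) \<bullet> (u - w))"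
    by (simp add: power2_norm_eq_inner power_mult_distrib s_def a_def mult_ac)
  then have Lp: "0 \<le> s * (u \<bullet> u - 2 * (u \<bullet> w) + w \<bullet> w) - (v \<bullet> v - 2 * (v \<bullet> w) + w \<bullet> w)"
    by (simp add: inner_diff_left inner_diff_right inner_commute) (simp add: algebra_simps)
  have "0 \<le> (w + t *\<^sub>R v) \<bullet> (w + t *\<^sub>R v)" by simp
  then have Sq: "0 \<le> w \<bullet> w + 2 * t * (v \<bullet> w) + t^2 * (v \<bullet> v)"
    by (simp add: inner_add_left inner_add_right inner_commute power2_eq_square algebra_simps)
  have "A (Suc k) * (v \<bullet> v) + B (Suc k) * ((1 - b) * (v \<bullet> d) - a * (v \<bullet> w)) \<le> A k * (u \<bullet> u) + B k * (u \<bullet> d)"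
  proof (rule alg[OF s0 s1 b0 _ a0(1) Bpos t_def _ _ _ M' Lp Sq])
    show "0 < \<beta> (Suc k)" using beta_range by blast
    show "A (Suc k) = a * \<beta> (Suc k) * (1 - s - b\<^sup>2) / (b * (1 - b) * (1 - s)) / (2 * \<beta> (Suc k)) * (B k / (1 - b))"
      unfolding A_def alpha_rec B_rec a_def b_def s_def ..
    show "B (Suc k) = B k / (1 - b)" unfolding B_rec b_def ..
    show "A k = a / (2 * b) * B k" unfolding A_def a_def b_def ..
  qed
  then show "V (Suc k) \<le> V k" using Vk Vk1 by simp
qed

end
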